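(* For all integers $n \geq 0$ and $0 \leq k \leq n$, $$(-1)^k\, 2^{-2n}\binom{2n+1}{n-k}(2k+1) = (2n+1)\sum_{j=k}^{n}(-1)^j\, 2^{-2j}\binom{n}{j}\binom{2j+1}{j-k}.$$ *)

theory Defs
  imports Complex_Main
begin

end

theory Submission imports Defs "HOL-Computational_Algebra.Polynomial" begin
lemma coeff_lin_pow: "coeff ([:a, b:] ^ n) i = of_nat (n choose i) * b ^ i * (a::'a::comm_semiring_1) ^ (n - i)"
proof (cases "i \<le> n")
  case True thus ?thesis by (rule coeff_linear_poly_power)
next
  case False
  have "degree ([:a, b:] ^ n) \<le> degree [:a,b:] * n" by (rule degree_power_le)
  also have "degree [:a,b:] \<le> 1" by simp
  hence "degree [:a,b:] * n \<le> n" by (simp add: mult_le_mono1 [of _ 1, simplified])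
  finally have "degree ([:a, b:] ^ n) < i" using False by simp
  thus ?thesis using False by (simp add: coeff_eq_0 binomial_eq_0)
qed


lemma polyid:
  fixes n :: nat
  shows "(\<Sum>j\<le>n. smult (real (n choose j) * (-1)^j * 4^(n-j)) (monom 1 (n-j) * [:1,1:]^(2*j+1)))
     = smult ((-1)^n) ([:1,1:] * [:1,-1:]^(2*n))"
proof -
  have e: "smult (-1) ([:1,1:]^2) + monom (4::real) 1 = smult (-1) ([:1,-1:]^2)"
    by (simp add: poly_eq_iff coeff_monom power2_eq_square coeff_pCons split: nat.split)
  have "(smult (-1) ([:1,1:]^2) + monom (4::real) 1)^n = (\<Sum>j\<le>n. of_nat (n choose j) * (smult (-1) ([:1,1:]^2))^j * (monom 4 1)^(n-j))"
    by (rule binomial_ring)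
  also have "\<dots> = (\<Sum>j\<le>n. smult (real (n choose j) * (-1)^j * 4^(n-j)) (monom 1 (n-j) * [:1,1:]^(2*j)))"
  proof (intro sum.cong refl)
    fix j
    show "of_nat (n choose j) * (smult (-1) ([:1,1:]^2))^j * (monom 4 1)^(n-j) = smult (real (n choose j) * (-1)^j * 4^(n-j)) (monom 1 (n-j) * ([:1,1:]::real poly)^(2*j))"
    proof -
      have 1: "(smult (-1) ([:1,1:]^2))^j = smult ((-1)^j) (([:1,1:]::real poly)^(2*j))"
        by (simp only: smult_power power_mult)
      have 2: "(monom (4::real) 1)^(n-j) = smult (4^(n-j)) (monom 1 (n-j))"
        by (simp add: monom_power smult_monom)
      show ?thesis unfolding 1 2 of_nat_mult_conv_smult
        by (simp only: mult_smult_left mult_smult_right smult_smult mult_ac)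
    qed
  qed
  finally have h0: "(smult (-1) ([:1,-1:]^2))^n = (\<Sum>j\<le>n. smult (real (n choose j) * (-1)^j * 4^(n-j)) (monom 1 (n-j) * ([:1,1:]::real poly)^(2*j)))"
    unfolding e .
  have h: "(\<Sum>j\<le>n. smult (real (n choose j) * (-1)^j * 4^(n-j)) (monom 1 (n-j) * [:1,1:]^(2*j))) = smult ((-1)^n) ([:1,-1:]^(2*n))"
    using h0 by (simp only: smult_power power_mult)
  have "(\<Sum>j\<le>n. smult (real (n choose j) * (-1)^j * 4^(n-j)) (monom 1 (n-j) * [:1,1:]^(2*j+1)))
     = [:1,1:] * (\<Sum>j\<le>n. smult (real (n choose j) * (-1)^j * 4^(n-j)) (monom 1 (n-j) * [:1,1:]^(2*j)))"
    by (simp add: sum_distrib_left mult_ac)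
  thus ?thesis using h by simp
qed
lemma binom_fact:
  fixes n k :: nat assumes "k \<le> n"
  shows "real (2*n+1) * (real ((2*n) choose (n-k)) - (if n - k = 0 then 0 else real ((2*n) choose (n-k-1))))
       = real ((2 * n + 1) choose (n - k)) * real (2 * k + 1)"
proof -
  define m where "m = n - k"
  have a: "(2*n+1-m) * ((2*n+1) choose m) = (2*n+1) * ((2*n) choose m)"
    using binomial_absorb_comp[of "2*n+1" m] by simp
  have b: "m > 0 \<Longrightarrow> m * ((2*n+1) choose m) = (2*n+1) * ((2*n) choose (m-1))"
    using binomial_absorption[of "m-1" "2*n+1"] by simp
  have ra: "real (2*n+1-m) * real ((2*n+1) choose m) = real (2*n+1) * real ((2*n) choose m)"
    using arg_cong[OF a, of real] by (simp only: of_nat_mult)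
  have c: "real (2*n+1-m) = real (2*k+1) + real m" using assms unfolding m_def by simp
  show ?thesis
  proof (cases "m = 0")
    case True
    thus ?thesis using ra c unfolding m_def[symmetric] by simp
  next
    case False
    have rb: "real m * real ((2*n+1) choose m) = real (2*n+1) * real ((2*n) choose (m-1))"
      using arg_cong[OF b, of real] False by (simp only: of_nat_mult)
    have alg: "(K+M)*X = N*Y \<Longrightarrow> M*X = N*Z \<Longrightarrow> N*(Y-Z) = X*K" for K M X N Y Z :: real
      by (simp add: algebra_simps)
    have "real (2*n+1) * (real ((2*n) choose m) - real ((2*n) choose (m-1))) = real ((2 * n + 1) choose m) * real (2 * k + 1)"
      by (rule alg[OF ra[unfolded c] rb])
    thus ?thesis using False unfolding m_def[symmetric] by simp
  qed
qed

theorem mainTheorem12: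
  fixes n k :: nat
  assumes "k \<le> n"
  shows "(-1::real) ^ k * (1 / 2 ^ (2 * n)) * real ((2 * n + 1) choose (n - k)) * real (2 * k + 1)
         = real (2 * n + 1) * (\<Sum>j = k..n. (-1::real) ^ j * (1 / 2 ^ (2 * j))
              * real (n choose j) * real ((2 * j + 1) choose (j - k)))"
proof -
  define m where "m = n - k"
  define D where "D = real ((2*n) choose m) - (if m = 0 then 0 else real ((2*n) choose (m-1)))"
  have "coeff (\<Sum>j\<le>n. smult (real (n choose j) * (-1)^j * 4^(n-j)) (monom 1 (n-j) * [:1,1:]^(2*j+1))) m
     = coeff (smult ((-1)^n) ([:1,1:] * [:1,-1:]^(2*n))) m"
    by (simp only: polyid)
  moreover have "coeff (\<Sum>j\<le>n. smult (real (n choose j) * (-1)^j * 4^(n-j)) (monom 1 (n-j) * [:1,1:]^(2*j+1))) m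
     = (\<Sum>j=k..n. real (n choose j) * (-1)^j * 4^(n-j) * real ((2 * j + 1) choose (j - k)))"
  proof -
    have "coeff (\<Sum>j\<le>n. smult (real (n choose j) * (-1)^j * 4^(n-j)) (monom 1 (n-j) * [:1,1:]^(2*j+1))) m
      = (\<Sum>j\<le>n. if j < k then 0 else real (n choose j) * (-1)^j * 4^(n-j) * real ((2 * j + 1) choose (j - k)))"
      unfolding coeff_sum
    proof (intro sum.cong refl)
      fix j assume "j \<in> {..n}"
      hence j: "j \<le> n" by simp
      show "coeff (smult (real (n choose j) * (-1)^j * 4^(n-j)) (monom 1 (n-j) * [:1,1:]^(2*j+1))) m
         = (if j < k then 0 else real (n choose j) * (-1)^j * 4^(n-j) * real ((2 * j + 1) choose (j - k)))"
      proof (cases "j < k")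
        case True
        hence "m < n - j" using j assms unfolding m_def by simp
        thus ?thesis using True by (simp add: coeff_monom_mult)
      next
        case False
        hence "\<not> m < n - j" "m - (n - j) = j - k" using j assms unfolding m_def by auto
        moreover have cl: "coeff ([:1,1:]^(2*j+1)) (j-k) = real ((2*j+1) choose (j-k))"
          by (simp only: coeff_lin_pow) simp
        ultimately show ?thesis using False by (simp only: coeff_smult coeff_monom_mult if_False cl)
      qed
    qed
    also have "\<dots> = (\<Sum>j=k..n. real (n choose j) * (-1)^j * 4^(n-j) * real ((2 * j + 1) choose (j - k)))"
    proof -
      have "{..n} = {..<k} \<union> {k..n}" using assms by auto
      hence "(\<Sum>j\<le>n. if j < k then 0 else real (n choose j) * (-1)^j * 4^(n-j) * real ((2 * j + 1) choose (j - k)))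
         = (\<Sum>j\<in>{..<k}. if j < k then 0 else real (n choose j) * (-1)^j * 4^(n-j) * real ((2 * j + 1) choose (j - k)))
          + (\<Sum>j\<in>{k..n}. if j < k then 0 else real (n choose j) * (-1)^j * 4^(n-j) * real ((2 * j + 1) choose (j - k)))"
        by (simp add: sum.union_disjoint ivl_disj_int)
      thus ?thesis by simp
    qed
    finally show ?thesis .
  qed
  moreover have "coeff (smult ((-1)^n) ([:1,1:] * [:1,-1:]^(2*n))) m = (-1::real)^k * D"
  proof -
    have pc: "[:1,1:] * q = q + pCons 0 (q::real poly)" for q
      by (simp add: mult_pCons_left)
    have "coeff ([:1,1:] * [:1,-1:]^(2*n)) m = (-1)^m * D"
    proof (cases m)
      case 0 thus ?thesis unfolding pc D_def by (simp add: coeff_lin_pow)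
    next
      case (Suc i) thus ?thesis unfolding pc D_def by (simp add: coeff_lin_pow algebra_simps)
    qed
    moreover have "(-1::real)^n * (-1)^m = (-1)^k"
    proof -
      have "(-1::real)^n * (-1)^m = (-1)^(n+m)" by (simp add: power_add)
      also have "n + m = k + 2*m" using assms unfolding m_def by simp
      finally show ?thesis by (simp add: power_add power_mult)
    qed
    ultimately show ?thesis by (simp add: mult.assoc[symmetric])
  qed
  ultimately have key: "(\<Sum>j=k..n. real (n choose j) * (-1)^j * 4^(n-j) * real ((2 * j + 1) choose (j - k))) = (-1)^k * D"
    by simp
  have "(\<Sum>j = k..n. (-1::real) ^ j * (1 / 2 ^ (2 * j)) * real (n choose j) * real ((2 * j + 1) choose (j - k)))
     = (\<Sum>j=k..n. real (n choose j) * (-1)^j * 4^(n-j) * real ((2 * j + 1) choose (j - k))) / 4^n"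
    unfolding sum_divide_distrib
  proof (intro sum.cong refl)
    fix j assume "j \<in> {k..n}"
    hence "4^n = (4::real)^(n-j) * 4^j" by (simp add: power_add[symmetric])
    moreover have "(2::real)^(2*j) = 4^j" by (simp add: power_mult)
    ultimately show "(-1::real) ^ j * (1 / 2 ^ (2 * j)) * real (n choose j) * real ((2 * j + 1) choose (j - k))
       = real (n choose j) * (-1)^j * 4^(n-j) * real ((2 * j + 1) choose (j - k)) / 4^n"
      by (simp add: field_simps)
  qed
  also have "\<dots> = (-1)^k * D / 4^n" using key by simp
  finally have S: "(\<Sum>j = k..n. (-1::real) ^ j * (1 / 2 ^ (2 * j)) * real (n choose j) * real ((2 * j + 1) choose (j - k))) = (-1)^k * D / 4^n" .
  have bf: "real (2*n+1) * D = real ((2 * n + 1) choose (n - k)) * real (2 * k + 1)"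
    using binom_fact[OF assms] unfolding D_def m_def .
  have "(2::real)^(2*n) = 4^n" by (simp add: power_mult)
  moreover have "real (2*n+1) * ((-1)^k * D / 4^n) = (-1)^k * (real (2*n+1) * D) / 4^n" by simp
  ultimately show ?thesis unfolding S bf by simp
qed

end
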